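(* Let $m,n\ge 2$ and let $W$ be a channel from $\{1,\dots,m\}$ to $\{1,\dots,n\}$. Let $g=\max_{1\le j\le n}(\mathbf{1}W)_j$. Then $\underline{P}_W(1)=(g-m+1)_+$. If $\underline{P}_W(1)>0$ or $m=2$ or $n=2$, then $\overline{C}_{11}(W)=1-\underline{P}_W(1)$; otherwise \[ \log_2\gamma\le \overline{C}_{11}(W)\le \log_2(o-1)+\overline{P}_W(o)\log_2\frac{o}{o-1}, \] where $o=m\wedge n$, $a=\lfloor\mathbf{1}W\rfloor$, $b=\lceil \mathbf{1}W\rceil$ (entrywise), and $\gamma=\mathrm{w}(a)+\big(m-\sum_{j\in\mathrm{supp}(a)}b_j\big)_+$. Moreover, if $m\le n$ and $\mathbf{1}W\le\mathbf{1}'$ entrywise then $\overline{C}_{11}(W)=\log_2 m$, and if $m\ge n$ and $\mathbf{1}W\ge \mathbf{1}'$ entrywise then $\overline{C}_{11}(W)=\log_2 n$, where $\mathbf{1}'$ is the all-one vector of length $n$.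
   Context: A channel from $\mathcal{X}=\{1,\dots,m\}$ to $\mathcal{Y}=\{1,\dots,n\}$ is an $m\times n$ row-stochastic matrix $W=(W_{x,y})$. A deterministic channel is a channel whose entries are all $0$ or $1$ (identified with a map $\mathcal{X}\to\mathcal{Y}$). $\mathcal{D}$ is the set of all deterministic channels, $\mathrm{rank}(D)$ is the matrix rank. $\Lambda(W)=\{\lambda \text{ probability distribution on }\mathcal{D}: W=\sum_{D}\lambda_D D\}$. $C_{11}(\lambda)=\sum_D\lambda_D\log_2\mathrm{rank}(D)$ and $\overline{C}_{11}(W)=\sup\{C_{11}(\lambda):\lambda\in\Lambda(W)\}$. $P_\lambda(r)=\lambda(\{D:\mathrm{rank}(D)=r\})$, $\underline{P}_W(r)=\min_{\lambda\in\Lambda(W)}P_\lambda(r)$, $\overline{P}_W(r)=\max_{\lambda\in\Lambda(W)}P_\lambda(r)$. $\mathbf{1}$ is the all-one row vector of length $m$ (so $\mathbf{1}W$ is the vector of column sums). $\mathrm{w}(a)$ is the number of nonzero entries of $a$, $\mathrm{supp}(a)$ the set of indices of nonzero entries, $(x)_+=\max(x,0)$, $x\wedge y=\min(x,y)$. *)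

theory Defs
  imports "HOL-Analysis.Analysis"
begin

text \<open>Input alphabet = type 'm (m = CARD('m)), output alphabet = type 'n (n = CARD('n)).
  A channel is an m x n row-stochastic real matrix.\<close>

definition is_channel :: "real^'n^'m \<Rightarrow> bool" where
  "is_channel W \<longleftrightarrow> (\<forall>x y. W $ x $ y \<ge> 0) \<and> (\<forall>x. (\<Sum>y\<in>UNIV. W $ x $ y) = 1)"

definition det_channels :: "(real^'n^'m) set" where
  "det_channels = {D. is_channel D \<and> (\<forall>x y. D $ x $ y = 0 \<or> D $ x $ y = 1)}"

definition Lambda :: "real^'n^'m \<Rightarrow> (real^'n^'m \<Rightarrow> real) set" where
  "Lambda W = {lam. (\<forall>D. lam D \<ge> 0) \<and> (\<forall>D. D \<notin> det_channels \<longrightarrow> lam D = 0)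
                  \<and> (\<Sum>D\<in>det_channels. lam D) = 1
                  \<and> W = (\<Sum>D\<in>det_channels. lam D *\<^sub>R D)}"

definition C11 :: "(real^'n^'m \<Rightarrow> real) \<Rightarrow> real" where
  "C11 lam = (\<Sum>D\<in>(det_channels :: (real^'n^'m) set). lam D * log 2 (real (rank D)))"

definition C11_bar :: "real^'n^'m \<Rightarrow> real" where
  "C11_bar W = Sup (C11 ` Lambda W)"

definition P_lam :: "(real^'n^'m \<Rightarrow> real) \<Rightarrow> nat \<Rightarrow> real" where
  "P_lam lam r = (\<Sum>D\<in>{D\<in>(det_channels :: (real^'n^'m) set). rank D = r}. lam D)"

definition P_lower :: "real^'n^'m \<Rightarrow> nat \<Rightarrow> real" where
  "P_lower W r = Inf ((\<lambda>lam. P_lam lam r) ` Lambda W)"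

definition P_upper :: "real^'n^'m \<Rightarrow> nat \<Rightarrow> real" where
  "P_upper W r = Sup ((\<lambda>lam. P_lam lam r) ` Lambda W)"

definition colsum :: "real^'n^'m \<Rightarrow> 'n \<Rightarrow> real" where
  "colsum W j = (\<Sum>x\<in>UNIV. W $ x $ j)"

definition gamma :: "real^'n^'m \<Rightarrow> real" where
  "gamma W = (let a = (\<lambda>j. \<lfloor>colsum W j\<rfloor>); b = (\<lambda>j. \<lceil>colsum W j\<rceil>);
                  S = {j. a j \<noteq> 0}
              in real (card S) + max 0 (real CARD('m) - real_of_int (\<Sum>j\<in>S. b j)))"

end

theory Submission
  imports Defs
begin


definition stoch :: "('m::finite \<Rightarrow> 'n::finite \<Rightarrow> real) \<Rightarrow> bool" where
  "stoch W \<longleftrightarrow> (\<forall>x y. W x y \<ge> 0) \<and> (\<forall>x. (\<Sum>y\<in>UNIV. W x y) = 1)"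

definition cs :: "('m::finite \<Rightarrow> 'n::finite \<Rightarrow> real) \<Rightarrow> 'n \<Rightarrow> real" where
  "cs W y = (\<Sum>x\<in>UNIV. W x y)"

lemma card_nonint_ne1:
  fixes f :: "'a \<Rightarrow> real"
  assumes "finite A" "sum f A \<in> \<int>"
  shows "card {a\<in>A. f a \<notin> \<int>} \<noteq> 1"
proof
  assume "card {a\<in>A. f a \<notin> \<int>} = 1"
  then obtain a where a: "{a\<in>A. f a \<notin> \<int>} = {a}" by (metis card_1_singletonE)
  hence aA: "a \<in> A" "f a \<notin> \<int>" by auto
  have "sum f A = f a + sum f (A - {a})" using assms(1) aA by (simp add: sum.remove)
  moreover have "sum f (A - {a}) \<in> \<int>"
  proof (rule Ints_sum)
    fix b assume "b \<in> A - {a}" thus "f b \<in> \<int>" using a by blast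
  qed
  ultimately have "f a = sum f A - sum f (A - {a})" by simp
  also have "\<dots> \<in> \<int>" using assms(2) \<open>sum f (A - {a}) \<in> \<int>\<close> by (rule Ints_diff)
  finally show False using aA by simp
qed

lemma sum_ge_card2:
  fixes c :: "'a \<Rightarrow> nat"
  assumes "finite A" "R \<subseteq> A" "\<And>x. x \<in> R \<Longrightarrow> c x \<ge> k"
  shows "sum c A \<ge> k * card R"
proof -
  have "k * card R = (\<Sum>x\<in>R. k)" by simp
  also have "\<dots> \<le> sum c R" by (rule sum_mono) (use assms in auto)
  also have "\<dots> \<le> sum c A" by (rule sum_mono2) (use assms in auto)
  finally show ?thesis .
qed

lemma exists_delta:
  fixes W :: "'m::finite \<Rightarrow> 'n::finite \<Rightarrow> real"
  assumes st: "stoch W" and ne: "W x0 y0 \<notin> \<int>"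
  shows "\<exists>D::'m \<Rightarrow> 'n \<Rightarrow> real. (\<forall>x y. W x y \<in> \<int> \<longrightarrow> D x y = 0) \<and> (\<forall>x. (\<Sum>y\<in>UNIV. D x y) = 0)
          \<and> (\<forall>y. cs W y \<in> \<int> \<longrightarrow> (\<Sum>x\<in>UNIV. D x y) = 0) \<and> (\<exists>x y. D x y \<noteq> 0)"
proof -
  define Fr where "Fr = {p. W (fst p) (snd p) \<notin> \<int>}"
  define NI where "NI = {y. cs W y \<notin> \<int>}"
  define R where "R = {x. \<exists>y. (x,y) \<in> Fr}"
  define CI where "CI = {y. y \<notin> NI \<and> (\<exists>x. (x,y) \<in> Fr)}"
  define Cset where "Cset = (if NI = {} then CI - {SOME y. y \<in> CI} else CI)"
  have FrSig: "Fr = Sigma UNIV (\<lambda>x. {y. (x,y) \<in> Fr})" by auto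
  have FrSig2: "Fr = (\<lambda>(y,x). (x,y)) ` Sigma UNIV (\<lambda>y. {x. (x,y) \<in> Fr})" by force
  have cardF1: "card Fr = (\<Sum>x\<in>UNIV. card {y. (x,y) \<in> Fr})"
    by (subst FrSig) (simp add: card_SigmaI)
  have "card Fr = card (Sigma UNIV (\<lambda>y. {x. (x,y) \<in> Fr}))"
    by (subst FrSig2, rule card_image) (auto simp: inj_on_def)
  hence cardF2: "card Fr = (\<Sum>y\<in>UNIV. card {x. (x,y) \<in> Fr})"
    by (simp add: card_SigmaI)
  have row_ne1: "card {y. (x,y) \<in> Fr} \<noteq> 1" for x
  proof -
    have "(\<Sum>y\<in>UNIV. W x y) \<in> \<int>" using st by (simp add: stoch_def)
    from card_nonint_ne1[OF _ this] show ?thesis by (simp add: Fr_def)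
  qed
  have col_ne1: "card {x. (x,y) \<in> Fr} \<noteq> 1" if "y \<notin> NI" for y
  proof -
    have "(\<Sum>x\<in>UNIV. W x y) \<in> \<int>" using that by (simp add: NI_def cs_def)
    from card_nonint_ne1[OF _ this] show ?thesis by (simp add: Fr_def)
  qed
  have col_ne0: "card {x. (x,y) \<in> Fr} \<noteq> 0" if "y \<in> NI" for y
  proof
    assume "card {x. (x,y) \<in> Fr} = 0"
    hence "{x. (x,y) \<in> Fr} = {}" by simp
    hence "\<forall>x. W x y \<in> \<int>" by (auto simp: Fr_def)
    hence "cs W y \<in> \<int>" unfolding cs_def by (auto intro: Ints_sum)
    thus False using that by (simp add: NI_def)
  qed
  have NI_ne1: "card NI \<noteq> 1"
  proof -
    have "(\<Sum>y\<in>UNIV. cs W y) = (\<Sum>x\<in>UNIV. \<Sum>y\<in>UNIV. W x y)"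
      unfolding cs_def by (rule sum.swap)
    also have "\<dots> = real CARD('m)" using st by (simp add: stoch_def)
    finally have "(\<Sum>y\<in>UNIV. cs W y) \<in> \<int>" by simp
    from card_nonint_ne1[OF _ this] show ?thesis by (simp add: NI_def)
  qed
  have F_R: "card Fr \<ge> 2 * card R"
    unfolding cardF1
  proof (rule sum_ge_card2)
    fix x assume "x \<in> R"
    hence "card {y. (x,y) \<in> Fr} \<noteq> 0" by (auto simp: R_def)
    thus "2 \<le> card {y. (x,y) \<in> Fr}" using row_ne1[of x] by linarith
  qed auto
  have disj: "CI \<inter> NI = {}" by (auto simp: CI_def)
  have F_C: "card Fr \<ge> 2 * card CI + card NI"
  proof -
    have "2 * card CI \<le> (\<Sum>y\<in>CI. card {x. (x,y) \<in> Fr})"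
    proof (rule sum_ge_card2)
      fix y assume "y \<in> CI"
      hence "card {x. (x,y) \<in> Fr} \<noteq> 0" "y \<notin> NI" by (auto simp: CI_def)
      thus "2 \<le> card {x. (x,y) \<in> Fr}" using col_ne1[of y] by linarith
    qed auto
    moreover have "1 * card NI \<le> (\<Sum>y\<in>NI. card {x. (x,y) \<in> Fr})"
    proof (rule sum_ge_card2)
      fix y assume "y \<in> NI"
      thus "1 \<le> card {x. (x,y) \<in> Fr}" using col_ne0[of y] by linarith
    qed auto
    moreover have "(\<Sum>y\<in>CI. card {x. (x,y) \<in> Fr}) + (\<Sum>y\<in>NI. card {x. (x,y) \<in> Fr})
        = (\<Sum>y\<in>CI \<union> NI. card {x. (x,y) \<in> Fr})"
      using disj by (simp add: sum.union_disjoint)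
    moreover have "(\<Sum>y\<in>CI \<union> NI. card {x. (x,y) \<in> Fr}) \<le> card Fr"
      unfolding cardF2 by (rule sum_mono2) auto
    ultimately show ?thesis by linarith
  qed
  have Frne: "(x0,y0) \<in> Fr" using ne by (simp add: Fr_def)
  have main_count: "card Fr > card R + card Cset"
  proof (cases "NI = {}")
    case True
    hence "y0 \<in> CI" using Frne by (auto simp: CI_def)
    hence "(SOME y. y \<in> CI) \<in> CI" by (rule someI)
    hence "card Cset = card CI - 1" using True
      by (auto simp: Cset_def card_Diff_singleton)
    moreover have "card CI > 0" using \<open>y0 \<in> CI\<close> by (auto simp: card_gt_0_iff)
    ultimately show ?thesis using F_R F_C by linarith
  next
    case False
    hence "card NI \<noteq> 0" by simp
    hence "card NI \<ge> 2" using NI_ne1 by linarith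
    thus ?thesis using F_R F_C False by (simp add: Cset_def)
  qed
  define v :: "'m \<times> 'n \<Rightarrow> real^('m + 'n)" where
    "v p = axis (Inl (fst p)) 1 + (if snd p \<in> Cset then axis (Inr (snd p)) 1 else 0)" for p
  have vL: "v p $ Inl x = (if fst p = x then 1 else 0)" for p x
    by (simp add: v_def axis_def)
  have vR: "v p $ Inr y = (if snd p = y \<and> y \<in> Cset then 1 else 0)" for p y
    by (simp add: v_def axis_def)
  have exE: "\<exists>E :: 'm \<times> 'n \<Rightarrow> real. (\<forall>p. p \<notin> Fr \<longrightarrow> E p = 0) \<and> (\<Sum>p\<in>UNIV. E p *\<^sub>R v p) = 0 \<and> (\<exists>p. E p \<noteq> 0)"
  proof (cases "inj_on v Fr")
    case False
    then obtain p q where pq: "p \<in> Fr" "q \<in> Fr" "p \<noteq> q" "v p = v q" by (auto simp: inj_on_def)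
    define E where "E r = (if r = p then 1 else if r = q then -1 else (0::real))" for r
    have "(\<Sum>r\<in>UNIV. E r *\<^sub>R v r) = (\<Sum>r\<in>UNIV. (if r = p then v p else 0) - (if r = q then v q else 0))"
      by (rule sum.cong) (use pq in \<open>auto simp: E_def\<close>)
    also have "\<dots> = 0" by (simp add: sum_subtractf pq)
    finally have "(\<Sum>r\<in>UNIV. E r *\<^sub>R v r) = 0" .
    moreover have "E p \<noteq> 0" by (simp add: E_def)
    moreover have "\<forall>r. r \<notin> Fr \<longrightarrow> E r = 0" using pq by (auto simp: E_def)
    ultimately show ?thesis by blast
  next
    case True
    define B where "B = (\<lambda>x. axis (Inl x) (1::real)) ` R \<union> (\<lambda>y. axis (Inr y) 1) ` Cset"
    have finB: "finite B" by (simp add: B_def)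
    have cardB: "card B \<le> card R + card Cset"
      unfolding B_def by (rule order_trans[OF card_Un_le]) (intro add_mono card_image_le; simp)
    have sub: "v ` Fr \<subseteq> span B"
    proof
      fix w assume "w \<in> v ` Fr"
      then obtain p where p: "p \<in> Fr" "w = v p" by auto
      have "fst p \<in> R" using p by (auto simp: R_def intro: exI[of _ "snd p"])
      hence a: "axis (Inl (fst p)) 1 \<in> span B" by (auto simp: B_def intro: span_base)
      have b: "(if snd p \<in> Cset then axis (Inr (snd p)) 1 else 0) \<in> span B"
        by (auto simp: B_def intro: span_base span_zero)
      show "w \<in> span B" unfolding p v_def by (rule span_add[OF a b])
    qed
    have "dim (v ` Fr) \<le> card B" by (rule dim_le_card[OF sub finB])
    moreover have "card (v ` Fr) = card Fr" using True by (simp add: card_image)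
    ultimately have "dependent (v ` Fr)"
      using main_count cardB by (intro dependent_biggerset_general) linarith
    then obtain t u where tu: "finite t" "t \<subseteq> v ` Fr" "(\<Sum>w\<in>t. u w *\<^sub>R w) = 0" "\<exists>w\<in>t. u w \<noteq> 0"
      by (auto simp: real_vector.dependent_explicit)
    define E where "E p = (if p \<in> Fr \<and> v p \<in> t then u (v p) else 0)" for p
    have "(\<Sum>p\<in>UNIV. E p *\<^sub>R v p) = (\<Sum>p\<in>Fr \<inter> v -` t. u (v p) *\<^sub>R v p)"
      by (rule sum.mono_neutral_cong_right) (auto simp: E_def)
    also have "\<dots> = (\<Sum>w\<in>t. u w *\<^sub>R w)"
    proof -
      have "v ` (Fr \<inter> v -` t) = t" using tu(2) by auto
      moreover have "inj_on v (Fr \<inter> v -` t)" using True by (auto simp: inj_on_def)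
      ultimately show ?thesis using sum.reindex[of v "Fr \<inter> v -` t" "\<lambda>w. u w *\<^sub>R w"] by simp
    qed
    also have "\<dots> = 0" by (rule tu(3))
    finally have s0: "(\<Sum>p\<in>UNIV. E p *\<^sub>R v p) = 0" .
    from tu(4) obtain w where "w \<in> t" "u w \<noteq> 0" by auto
    moreover then obtain p where "p \<in> Fr" "w = v p" using tu(2) by auto
    ultimately have "E p \<noteq> 0" by (simp add: E_def)
    moreover have "\<forall>r. r \<notin> Fr \<longrightarrow> E r = 0" by (auto simp: E_def)
    ultimately show ?thesis using s0 by blast
  qed
  then obtain E pn where E: "\<forall>p. p \<notin> Fr \<longrightarrow> E p = 0" "(\<Sum>p\<in>UNIV. E p *\<^sub>R v p) = 0" "E pn \<noteq> 0"
    by blast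
  have rowE: "(\<Sum>y\<in>UNIV. E (x,y)) = 0" for x
  proof -
    have "0 = (\<Sum>p\<in>UNIV. E p *\<^sub>R v p) $ Inl x" using E(2) by simp
    also have "\<dots> = (\<Sum>p\<in>UNIV. E p * (if fst p = x then 1 else 0))" by (simp add: vL)
    also have "\<dots> = (\<Sum>p\<in>{x} \<times> UNIV. E p)"
      by (rule sum.mono_neutral_cong_right) auto
    also have "\<dots> = (\<Sum>y\<in>UNIV. E (x,y))"
    proof -
      have "{x} \<times> UNIV = Pair x ` UNIV" by auto
      hence "sum E ({x} \<times> UNIV) = sum E (Pair x ` UNIV)" by (rule arg_cong)
      also have "\<dots> = (\<Sum>y\<in>UNIV. E (x,y))" by (subst sum.reindex) (auto simp: inj_on_def)
      finally show ?thesis .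
    qed
    finally show ?thesis by simp
  qed
  have colE: "(\<Sum>x\<in>UNIV. E (x,y)) = 0" if "y \<in> Cset" for y
  proof -
    have "0 = (\<Sum>p\<in>UNIV. E p *\<^sub>R v p) $ Inr y" using E(2) by simp
    also have "\<dots> = (\<Sum>p\<in>UNIV. E p * (if snd p = y then 1 else 0))" using that by (simp add: vR)
    also have "\<dots> = (\<Sum>p\<in>UNIV \<times> {y}. E p)"
      by (rule sum.mono_neutral_cong_right) auto
    also have "\<dots> = (\<Sum>x\<in>UNIV. E (x,y))"
    proof -
      have "UNIV \<times> {y} = (\<lambda>x. (x,y)) ` UNIV" by auto
      hence "sum E (UNIV \<times> {y}) = sum E ((\<lambda>x. (x,y)) ` UNIV)" by (rule arg_cong)
      also have "\<dots> = (\<Sum>x\<in>UNIV. E (x,y))" by (subst sum.reindex) (auto simp: inj_on_def)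
      finally show ?thesis .
    qed
    finally show ?thesis by simp
  qed
  define D where "D x y = E (x,y)" for x y
  have colz: "(\<Sum>x\<in>UNIV. D x y) = 0" if "y \<in> Cset \<or> (\<forall>x. (x,y) \<notin> Fr)" for y
    using that colE[of y] E(1) by (auto simp: D_def)
  have cols: "(\<Sum>x\<in>UNIV. D x y) = 0" if "cs W y \<in> \<int>" for y
  proof (cases "y \<in> Cset \<or> (\<forall>x. (x,y) \<notin> Fr)")
    case True thus ?thesis by (rule colz)
  next
    case False
    hence yCI: "y \<in> CI" using that by (auto simp: CI_def NI_def)
    with False have NI0: "NI = {}" and yS: "y = (SOME y. y \<in> CI)" by (auto simp: Cset_def split: if_splits)
    have oth: "(\<Sum>x\<in>UNIV. D x y') = 0" if "y' \<noteq> y" for y'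
    proof (rule colz)
      show "y' \<in> Cset \<or> (\<forall>x. (x,y') \<notin> Fr)" using that NI0 yS by (auto simp: Cset_def CI_def)
    qed
    have "0 = (\<Sum>x\<in>UNIV. \<Sum>y\<in>UNIV. D x y)" using rowE by (simp add: D_def)
    also have "\<dots> = (\<Sum>y'\<in>UNIV. \<Sum>x\<in>UNIV. D x y')" by (rule sum.swap)
    also have "\<dots> = (\<Sum>x\<in>UNIV. D x y) + (\<Sum>y'\<in>UNIV - {y}. \<Sum>x\<in>UNIV. D x y')"
      using sum.remove[of "UNIV::'n set" y "\<lambda>y'. \<Sum>x\<in>UNIV. D x y'"] by simp
    also have "(\<Sum>y'\<in>UNIV - {y}. \<Sum>x\<in>UNIV. D x y') = 0" using oth by simp
    finally show ?thesis by simp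
  qed
  have "D (fst pn) (snd pn) \<noteq> 0" using E(3) by (simp add: D_def)
  moreover have "\<forall>x y. W x y \<in> \<int> \<longrightarrow> D x y = 0" using E(1) by (auto simp: D_def Fr_def)
  moreover have "\<forall>x. (\<Sum>y\<in>UNIV. D x y) = 0" using rowE by (simp add: D_def)
  ultimately have "(\<forall>x y. W x y \<in> \<int> \<longrightarrow> D x y = 0) \<and> (\<forall>x. (\<Sum>y\<in>UNIV. D x y) = 0) \<and> (\<forall>y. cs W y \<in> \<int> \<longrightarrow> (\<Sum>x\<in>UNIV. D x y) = 0) \<and> (\<exists>x y. D x y \<noteq> 0)" using cols by blast
  thus ?thesis by blast
qed


definition Frac :: "('m::finite \<Rightarrow> 'n::finite \<Rightarrow> real) \<Rightarrow> ('m \<times> 'n + 'n) set" where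
  "Frac W = {z. case z of Inl p \<Rightarrow> W (fst p) (snd p) \<notin> \<int> | Inr y \<Rightarrow> cs W y \<notin> \<int>}"

definition good :: "('m::finite \<Rightarrow> 'n::finite \<Rightarrow> real) \<Rightarrow> ('m \<Rightarrow> 'n) \<Rightarrow> bool" where
  "good W f \<longleftrightarrow> (\<forall>j. \<lfloor>cs W j\<rfloor> \<le> int (card {x. f x = j}) \<and> int (card {x. f x = j}) \<le> \<lceil>cs W j\<rceil>)"

definition decomp :: "('m::finite \<Rightarrow> 'n::finite \<Rightarrow> real) \<Rightarrow> (('m \<Rightarrow> 'n) \<Rightarrow> real) \<Rightarrow> bool" where
  "decomp W lam \<longleftrightarrow> (\<forall>f. lam f \<ge> 0) \<and> (\<Sum>f\<in>UNIV. lam f) = 1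
     \<and> (\<forall>x y. W x y = (\<Sum>f\<in>UNIV. lam f * (if f x = y then 1 else 0)))
     \<and> (\<forall>f. lam f > 0 \<longrightarrow> good W f)"

lemma stoch_le1:
  assumes "stoch W" shows "W x y \<le> 1"
proof -
  have "W x y = (\<Sum>y'\<in>{y}. W x y')" by simp
  also have "\<dots> \<le> (\<Sum>y'\<in>UNIV. W x y')"
    by (rule sum_mono2) (use assms in \<open>auto simp: stoch_def\<close>)
  also have "\<dots> = 1" using assms by (simp add: stoch_def)
  finally show ?thesis .
qed

lemma interval_lemma:
  fixes lo hi a b t :: real
  assumes "lo < a" "a < hi" "0 \<le> t" "b > 0 \<Longrightarrow> t \<le> (hi - a) / b" "b < 0 \<Longrightarrow> t \<le> (lo - a) / b"
  shows "lo \<le> a + t * b \<and> a + t * b \<le> hi"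
proof (cases "b > 0")
  case True
  hence "t * b \<le> hi - a" using assms(4) by (simp add: pos_le_divide_eq)
  moreover have "t * b \<ge> 0" using True assms(3) by simp
  ultimately show ?thesis using assms(1,2) by linarith
next
  case False
  show ?thesis
  proof (cases "b < 0")
    case True
    hence "t * b \<ge> lo - a" using assms(5) by (simp add: neg_le_divide_eq)
    moreover have "t * b \<le> 0" using True assms(3) by (simp add: mult_nonneg_nonpos)
    ultimately show ?thesis using assms(1,2) by linarith
  next
    case False
    hence "b = 0" using \<open>\<not> b > 0\<close> by simp
    thus ?thesis using assms(1,2) by simp
  qed
qed

lemma step_lemma:
  fixes W D :: "'m::finite \<Rightarrow> 'n::finite \<Rightarrow> real"
  assumes st: "stoch W"
    and supp: "\<forall>x y. W x y \<in> \<int> \<longrightarrow> D x y = 0"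
    and rows: "\<forall>x. (\<Sum>y\<in>UNIV. D x y) = 0"
    and cols: "\<forall>y. cs W y \<in> \<int> \<longrightarrow> (\<Sum>x\<in>UNIV. D x y) = 0"
    and nz: "D x0 y0 \<noteq> 0"
  shows "\<exists>t>0. stoch (\<lambda>x y. W x y + t * D x y) \<and> Frac (\<lambda>x y. W x y + t * D x y) \<subset> Frac W
           \<and> (\<forall>j. of_int \<lfloor>cs W j\<rfloor> \<le> cs (\<lambda>x y. W x y + t * D x y) j
                 \<and> cs (\<lambda>x y. W x y + t * D x y) j \<le> of_int \<lceil>cs W j\<rceil>)"
proof -
  define dc where "dc j = (\<Sum>x\<in>UNIV. D x j)" for j
  have W01: "0 < W x y \<and> W x y < 1" if "D x y \<noteq> 0" for x y
  proof -
    have "W x y \<notin> \<int>" using supp that by blast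
    moreover have "0 \<le> W x y" "W x y \<le> 1" using st stoch_le1 by (auto simp: stoch_def)
    ultimately show ?thesis by (metis Ints_0 Ints_1 order_less_le)
  qed
  have csfl: "of_int \<lfloor>cs W j\<rfloor> < cs W j \<and> cs W j < of_int \<lceil>cs W j\<rceil>" if "dc j \<noteq> 0" for j
  proof -
    have "cs W j \<notin> \<int>" using cols that by (auto simp: dc_def)
    thus ?thesis by (metis Ints_of_int ceiling_correct floor_correct order_less_le)
  qed
  define C where "C = {t. t > 0 \<and> ((\<exists>x y. D x y \<noteq> 0 \<and> (W x y + t * D x y = 0 \<or> W x y + t * D x y = 1))
      \<or> (\<exists>j. dc j \<noteq> 0 \<and> (cs W j + t * dc j = of_int \<lfloor>cs W j\<rfloor> \<or> cs W j + t * dc j = of_int \<lceil>cs W j\<rceil>)))}"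
  have finC: "finite C"
  proof (rule finite_subset)
    show "C \<subseteq> (\<lambda>(x,y). (0 - W x y) / D x y) ` UNIV \<union> (\<lambda>(x,y). (1 - W x y) / D x y) ` UNIV
       \<union> (\<lambda>j. (of_int \<lfloor>cs W j\<rfloor> - cs W j) / dc j) ` UNIV \<union> (\<lambda>j. (of_int \<lceil>cs W j\<rceil> - cs W j) / dc j) ` UNIV"
    proof
      fix t assume "t \<in> C"
      then consider (a) x y where "D x y \<noteq> 0" "W x y + t * D x y = 0"
        | (b) x y where "D x y \<noteq> 0" "W x y + t * D x y = 1"
        | (c) j where "dc j \<noteq> 0" "cs W j + t * dc j = of_int \<lfloor>cs W j\<rfloor>"
        | (d) j where "dc j \<noteq> 0" "cs W j + t * dc j = of_int \<lceil>cs W j\<rceil>"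
        unfolding C_def by blast
      thus "t \<in> (\<lambda>(x,y). (0 - W x y) / D x y) ` UNIV \<union> (\<lambda>(x,y). (1 - W x y) / D x y) ` UNIV
       \<union> (\<lambda>j. (of_int \<lfloor>cs W j\<rfloor> - cs W j) / dc j) ` UNIV \<union> (\<lambda>j. (of_int \<lceil>cs W j\<rceil> - cs W j) / dc j) ` UNIV"
      proof cases
        case a
        hence "t = (0 - W x y) / D x y" by (simp add: field_simps)
        thus ?thesis by (auto intro!: image_eqI[of _ _ "(x,y)"])
      next
        case b
        hence "t = (1 - W x y) / D x y" by (simp add: field_simps)
        thus ?thesis by (auto intro!: image_eqI[of _ _ "(x,y)"])
      next
        case c
        hence "t = (of_int \<lfloor>cs W j\<rfloor> - cs W j) / dc j" by (simp add: field_simps)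
        thus ?thesis by auto
      next
        case d
        hence "t = (of_int \<lceil>cs W j\<rceil> - cs W j) / dc j" by (simp add: field_simps)
        thus ?thesis by auto
      qed
    qed
  qed simp
  have C_ent: "t' \<in> C" if "D x y \<noteq> 0" "t' > 0" "W x y + t' * D x y = 0 \<or> W x y + t' * D x y = 1" for x y t'
    using that unfolding C_def by blast
  have C_col: "t' \<in> C" if "dc j \<noteq> 0" "t' > 0" "cs W j + t' * dc j = of_int \<lfloor>cs W j\<rfloor> \<or> cs W j + t' * dc j = of_int \<lceil>cs W j\<rceil>" for j t'
    using that unfolding C_def by blast
  have ent_cand: "(1 - W x y) / D x y \<in> C" if "D x y > 0" for x y
    using W01[of x y] that by (intro C_ent[of x y]) (auto simp: field_simps)
  have ent_cand2: "(0 - W x y) / D x y \<in> C" if "D x y < 0" for x y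
    using W01[of x y] that by (intro C_ent[of x y]) (auto simp: field_simps)
  have col_cand: "(of_int \<lceil>cs W j\<rceil> - cs W j) / dc j \<in> C" if "dc j > 0" for j
    using csfl[of j] that by (intro C_col[of j]) (auto simp: field_simps)
  have col_cand2: "(of_int \<lfloor>cs W j\<rfloor> - cs W j) / dc j \<in> C" if "dc j < 0" for j
    using csfl[of j] that by (intro C_col[of j]) (auto simp: field_simps)
  have Cne: "C \<noteq> {}"
  proof (cases "D x0 y0 > 0")
    case True thus ?thesis using ent_cand by blast
  next
    case False hence "D x0 y0 < 0" using nz by simp
    thus ?thesis using ent_cand2 by blast
  qed
  define t where "t = Min C"
  have tC: "t \<in> C" unfolding t_def using finC Cne by (rule Min_in)
  have tle: "t \<le> s" if "s \<in> C" for s unfolding t_def using finC that by (rule Min_le)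
  have tpos: "t > 0" using tC by (simp add: C_def)
  define W' where "W' x y = W x y + t * D x y" for x y
  have csW': "cs W' j = cs W j + t * dc j" for j
    by (simp add: cs_def W'_def dc_def sum.distrib sum_distrib_left)
  have ent_ok: "0 \<le> W' x y \<and> W' x y \<le> 1" if "D x y \<noteq> 0" for x y
    unfolding W'_def
    using that W01[of x y] tpos tle[OF ent_cand[of x y]] tle[OF ent_cand2[of x y]]
    by (intro interval_lemma) auto
  have W'nn: "W' x y \<ge> 0" for x y
  proof (cases "D x y = 0")
    case True thus ?thesis using st by (simp add: W'_def stoch_def)
  next
    case False thus ?thesis using ent_ok by blast
  qed
  have col_ok: "of_int \<lfloor>cs W j\<rfloor> \<le> cs W' j \<and> cs W' j \<le> of_int \<lceil>cs W j\<rceil>" for j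
  proof (cases "dc j = 0")
    case True thus ?thesis by (simp add: csW')
  next
    case False thus ?thesis unfolding csW'
      using csfl[of j] tpos tle[OF col_cand[of j]] tle[OF col_cand2[of j]]
      by (intro interval_lemma) auto
  qed
  have stW': "stoch W'"
    using st rows W'nn by (simp add: stoch_def W'_def sum.distrib sum_distrib_left[symmetric])
  have sub: "Frac W' \<subseteq> Frac W"
  proof
    fix z assume z: "z \<in> Frac W'"
    show "z \<in> Frac W"
    proof (cases z)
      case (Inl p)
      show ?thesis
      proof (rule ccontr)
        assume "z \<notin> Frac W"
        hence "W (fst p) (snd p) \<in> \<int>" using Inl by (simp add: Frac_def)
        hence "W' (fst p) (snd p) = W (fst p) (snd p)" using supp by (simp add: W'_def)
        thus False using z Inl \<open>W (fst p) (snd p) \<in> \<int>\<close> by (simp add: Frac_def)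
      qed
    next
      case (Inr j)
      show ?thesis
      proof (rule ccontr)
        assume "z \<notin> Frac W"
        hence "cs W j \<in> \<int>" using Inr by (simp add: Frac_def)
        hence "cs W' j = cs W j" using cols by (simp add: csW' dc_def)
        thus False using z Inr \<open>cs W j \<in> \<int>\<close> by (simp add: Frac_def)
      qed
    qed
  qed
  have strict: "Frac W' \<noteq> Frac W"
  proof -
    from tC consider (a) x y where "D x y \<noteq> 0" "W' x y = 0 \<or> W' x y = 1"
      | (c) j where "dc j \<noteq> 0" "cs W' j = of_int \<lfloor>cs W j\<rfloor> \<or> cs W' j = of_int \<lceil>cs W j\<rceil>"
      unfolding C_def W'_def csW' by blast
    thus ?thesis
    proof cases
      case a
      hence "Inl (x,y) \<in> Frac W" using supp by (auto simp: Frac_def)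
      moreover have "Inl (x,y) \<notin> Frac W'" using a(2) by (auto simp: Frac_def)
      ultimately show ?thesis by blast
    next
      case c
      hence "Inr j \<in> Frac W" using cols by (auto simp: Frac_def dc_def)
      moreover have "Inr j \<notin> Frac W'" using c(2) by (auto simp: Frac_def)
      ultimately show ?thesis by blast
    qed
  qed
  show ?thesis
    using tpos stW' sub strict col_ok unfolding W'_def by (intro exI[of _ t]) auto
qed





lemma good_mono:
  assumes "\<forall>j. of_int \<lfloor>cs W j\<rfloor> \<le> cs W' j \<and> cs W' j \<le> of_int \<lceil>cs W j\<rceil>" "good W' f"
  shows "good W f"
  unfolding good_def
proof
  fix j
  have "\<lfloor>cs W j\<rfloor> \<le> \<lfloor>cs W' j\<rfloor>" using assms(1) by (simp add: le_floor_iff)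
  moreover have "\<lceil>cs W' j\<rceil> \<le> \<lceil>cs W j\<rceil>" using assms(1) by (simp add: ceiling_le_iff)
  ultimately show "\<lfloor>cs W j\<rfloor> \<le> int (card {x. f x = j}) \<and> int (card {x. f x = j}) \<le> \<lceil>cs W j\<rceil>"
    using assms(2) unfolding good_def by (meson order_trans)
qed

lemma integral_decomp:
  fixes W :: "'m::finite \<Rightarrow> 'n::finite \<Rightarrow> real"
  assumes st: "stoch W" and int: "\<forall>x y. W x y \<in> \<int>"
  shows "\<exists>lam. decomp W lam"
proof -
  have W01: "W x y = 0 \<or> W x y = 1" for x y
  proof -
    have "0 \<le> W x y" "W x y \<le> 1" using st stoch_le1 by (auto simp: stoch_def)
    moreover have "W x y \<in> \<int>" using int by blast
    then obtain k where "W x y = of_int k" by (rule Ints_cases)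
    ultimately have "0 \<le> k" "k \<le> 1" by simp_all
    hence "k = 0 \<or> k = 1" by linarith
    thus ?thesis using \<open>W x y = of_int k\<close> by auto
  qed
  have ex: "\<exists>y. W x y = 1" for x
  proof (rule ccontr)
    assume "\<not> ?thesis"
    hence "\<forall>y. W x y = 0" using W01 by blast
    hence "(\<Sum>y\<in>UNIV. W x y) = 0" by simp
    thus False using st by (simp add: stoch_def)
  qed
  have uniq: "y1 = y2" if "W x y1 = 1" "W x y2 = 1" for x y1 y2
  proof (rule ccontr)
    assume ne: "y1 \<noteq> y2"
    have "(\<Sum>y\<in>{y1,y2}. W x y) \<le> (\<Sum>y\<in>UNIV. W x y)"
      by (rule sum_mono2) (use st in \<open>auto simp: stoch_def\<close>)
    thus False using ne that st by (simp add: stoch_def)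
  qed
  define f where "f x = (SOME y. W x y = 1)" for x
  have fW: "W x y = (if f x = y then 1 else 0)" for x y
  proof -
    have "W x (f x) = 1" unfolding f_def using ex[of x] by (rule someI_ex)
    thus ?thesis using uniq[of x y "f x"] W01[of x y] by auto
  qed
  define lam where "lam g = (if g = f then 1 else (0::real))" for g
  have "decomp W lam"
    unfolding decomp_def
  proof (intro conjI allI impI)
    show "(\<Sum>g\<in>UNIV. lam g) = 1" by (simp add: lam_def)
    fix x y
    have "(\<Sum>g\<in>UNIV. lam g * (if g x = y then 1 else 0)) = (\<Sum>g\<in>UNIV. if g = f then (if f x = y then 1 else 0) else 0)"
      by (rule sum.cong) (auto simp: lam_def)
    thus "W x y = (\<Sum>g\<in>UNIV. lam g * (if g x = y then 1 else 0))" by (simp add: fW)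
  next
    fix g assume "lam g > 0"
    hence "g = f" by (simp add: lam_def split: if_splits)
    have "cs W j = real (card {x. f x = j})" for j
      by (simp add: cs_def fW sum.If_cases)
    thus "good W g" using \<open>g = f\<close> by (simp add: good_def)
  qed (simp add: lam_def)
  thus ?thesis by (rule exI[where x=lam])
qed

lemma decomp_exists:
  fixes W :: "'m::finite \<Rightarrow> 'n::finite \<Rightarrow> real"
  assumes "stoch W"
  shows "\<exists>lam. decomp W lam"
  using assms
proof (induction "card (Frac W)" arbitrary: W rule: less_induct)
  case less
  note st = less.prems
  show ?case
  proof (cases "\<forall>x y. W x y \<in> \<int>")
    case True thus ?thesis using integral_decomp st by blast
  next
    case False
    then obtain x0 y0 where nz0: "W x0 y0 \<notin> \<int>" by blast
    from exists_delta[OF st nz0] obtain D :: "'m \<Rightarrow> 'n \<Rightarrow> real" and x1 y1 where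
      D: "\<forall>x y. W x y \<in> \<int> \<longrightarrow> D x y = 0" "\<forall>x. (\<Sum>y\<in>UNIV. D x y) = 0"
         "\<forall>y. cs W y \<in> \<int> \<longrightarrow> (\<Sum>x\<in>UNIV. D x y) = 0" "D x1 y1 \<noteq> 0" by blast
    from step_lemma[OF st D(1) D(2) D(3) D(4)] obtain t1 where
      t1: "t1 > 0" "stoch (\<lambda>x y. W x y + t1 * D x y)" "Frac (\<lambda>x y. W x y + t1 * D x y) \<subset> Frac W"
        "\<forall>j. of_int \<lfloor>cs W j\<rfloor> \<le> cs (\<lambda>x y. W x y + t1 * D x y) j \<and> cs (\<lambda>x y. W x y + t1 * D x y) j \<le> of_int \<lceil>cs W j\<rceil>"
      by blast
    have D': "\<forall>x y. W x y \<in> \<int> \<longrightarrow> - D x y = 0" "\<forall>x. (\<Sum>y\<in>UNIV. - D x y) = 0"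
         "\<forall>y. cs W y \<in> \<int> \<longrightarrow> (\<Sum>x\<in>UNIV. - D x y) = 0" "- D x1 y1 \<noteq> 0"
      using D by (auto simp: sum_negf)
    from step_lemma[OF st D'(1) D'(2) D'(3) D'(4)] obtain t2 where
      t2: "t2 > 0" "stoch (\<lambda>x y. W x y + t2 * - D x y)" "Frac (\<lambda>x y. W x y + t2 * - D x y) \<subset> Frac W"
        "\<forall>j. of_int \<lfloor>cs W j\<rfloor> \<le> cs (\<lambda>x y. W x y + t2 * - D x y) j \<and> cs (\<lambda>x y. W x y + t2 * - D x y) j \<le> of_int \<lceil>cs W j\<rceil>"
      by blast
    define W1 where "W1 = (\<lambda>x y. W x y + t1 * D x y)"
    define W2 where "W2 = (\<lambda>x y. W x y + t2 * - D x y)"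
    have "card (Frac W1) < card (Frac W)" unfolding W1_def by (rule psubset_card_mono[OF _ t1(3)]) simp
    from less.hyps[OF this] t1(2) obtain lam1 where l1: "decomp W1 lam1" unfolding W1_def by blast
    have "card (Frac W2) < card (Frac W)" unfolding W2_def by (rule psubset_card_mono[OF _ t2(3)]) simp
    from less.hyps[OF this] t2(2) obtain lam2 where l2: "decomp W2 lam2" unfolding W2_def by blast
    define a where "a = t2 / (t1 + t2)"
    define b where "b = t1 / (t1 + t2)"
    have ab: "a \<ge> 0" "b \<ge> 0" "a + b = 1" "a * t1 = b * t2"
    proof -
      show "a \<ge> 0" "b \<ge> 0" using t1(1) t2(1) by (simp_all add: a_def b_def)
      show "a + b = 1" using t1(1) t2(1) unfolding a_def b_def by (simp add: add_divide_distrib[symmetric])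
      show "a * t1 = b * t2" unfolding a_def b_def by simp
    qed
    define lam where "lam f = a * lam1 f + b * lam2 f" for f
    have "decomp W lam"
      unfolding decomp_def
    proof (intro conjI allI impI)
      fix f show "lam f \<ge> 0" using l1 l2 ab by (simp add: lam_def decomp_def)
    next
      show "(\<Sum>f\<in>UNIV. lam f) = 1" using l1 l2 ab
        by (simp add: lam_def decomp_def sum.distrib sum_distrib_left[symmetric])
    next
      fix x y
      have "(\<Sum>f\<in>UNIV. lam f * (if f x = y then 1 else 0))
          = a * (\<Sum>f\<in>UNIV. lam1 f * (if f x = y then 1 else 0)) + b * (\<Sum>f\<in>UNIV. lam2 f * (if f x = y then 1 else 0))"
        by (simp add: lam_def sum.distrib sum_distrib_left algebra_simps)
      also have "\<dots> = a * W1 x y + b * W2 x y" using l1 l2 by (simp add: decomp_def)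
      also have "\<dots> = (a + b) * W x y + (a * t1 - b * t2) * D x y" unfolding W1_def W2_def
        by (simp add: algebra_simps)
      also have "\<dots> = W x y" using ab by simp
      finally show "W x y = (\<Sum>f\<in>UNIV. lam f * (if f x = y then 1 else 0))" by simp
    next
      fix f assume "lam f > 0"
      hence "lam1 f > 0 \<or> lam2 f > 0"
      proof (rule contrapos_pp)
        assume "\<not> (lam1 f > 0 \<or> lam2 f > 0)"
        hence "lam1 f = 0" "lam2 f = 0" using l1 l2 unfolding decomp_def by (meson not_le order_antisym)+
        thus "\<not> lam f > 0" by (simp add: lam_def)
      qed
      thus "good W f"
      proof
        assume "lam1 f > 0" hence "good W1 f" using l1 by (simp add: decomp_def)
        moreover have "\<forall>j. of_int \<lfloor>cs W j\<rfloor> \<le> cs W1 j \<and> cs W1 j \<le> of_int \<lceil>cs W j\<rceil>"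
          unfolding W1_def by (rule t1(4))
        ultimately show ?thesis using good_mono by blast
      next
        assume "lam2 f > 0" hence "good W2 f" using l2 by (simp add: decomp_def)
        moreover have "\<forall>j. of_int \<lfloor>cs W j\<rfloor> \<le> cs W2 j \<and> cs W2 j \<le> of_int \<lceil>cs W j\<rceil>"
          unfolding W2_def by (rule t2(4))
        ultimately show ?thesis using good_mono by blast
      qed
    qed
    thus ?thesis by (rule exI[where x=lam])
  qed
qed




definition Dm :: "('m::finite \<Rightarrow> 'n::finite) \<Rightarrow> real^'n^'m" where
  "Dm f = (\<chi> x y. if f x = y then 1 else 0)"

lemma Dm_nth: "Dm f $ x $ y = (if f x = y then 1 else 0)"
  by (simp add: Dm_def)

lemma inj_Dm: "inj Dm"
proof
  fix f g :: "'m::finite \<Rightarrow> 'n::finite" assume "Dm f = Dm g"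
  hence h: "Dm f $ x $ f x = Dm g $ x $ f x" for x by simp
  have "g x = f x" for x using h[of x] by (simp add: Dm_nth split: if_splits)
  thus "f = g" by (intro ext) simp
qed

lemma det_channels_eq: "(det_channels :: (real^'n::finite^'m::finite) set) = range Dm"
proof
  show "range Dm \<subseteq> (det_channels :: (real^'n^'m) set)"
  proof
    fix D :: "real^'n^'m" assume "D \<in> range Dm"
    then obtain f where D: "D = Dm f" by auto
    have "(\<Sum>y\<in>UNIV. D $ x $ y) = 1" for x
      by (simp add: D Dm_nth)
    thus "D \<in> det_channels" by (auto simp: det_channels_def is_channel_def D Dm_nth)
  qed
next
  show "(det_channels :: (real^'n^'m) set) \<subseteq> range Dm"
  proof
    fix D :: "real^'n^'m" assume D: "D \<in> det_channels"
    have ex: "\<exists>y. D $ x $ y = 1" for x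
    proof (rule ccontr)
      assume "\<not> ?thesis"
      hence "\<forall>y. D $ x $ y = 0" using D by (auto simp: det_channels_def)
      hence "(\<Sum>y\<in>UNIV. D $ x $ y) = 0" by simp
      thus False using D by (simp add: det_channels_def is_channel_def)
    qed
    have uniq: "y1 = y2" if "D $ x $ y1 = 1" "D $ x $ y2 = 1" for x y1 y2
    proof (rule ccontr)
      assume ne: "y1 \<noteq> y2"
      have "(\<Sum>y\<in>{y1,y2}. D $ x $ y) \<le> (\<Sum>y\<in>UNIV. D $ x $ y)"
        by (rule sum_mono2) (use D in \<open>auto simp: det_channels_def is_channel_def\<close>)
      thus False using ne that D by (simp add: det_channels_def is_channel_def)
    qed
    define f where "f x = (SOME y. D $ x $ y = 1)" for x
    have f1: "D $ x $ f x = 1" for x unfolding f_def using ex[of x] by (rule someI_ex)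
    have "D $ x $ y = Dm f $ x $ y" for x y
      using f1[of x] uniq[of x y "f x"] D by (auto simp: Dm_nth det_channels_def)
    hence "D = Dm f" by (simp add: vec_eq_iff)
    thus "D \<in> range Dm" by simp
  qed
qed

lemma rank_Dm: "rank (Dm f) = card (range f)"
proof -
  have r: "row i (Dm f) = axis (f i) (1::real)" for i
    by (simp add: row_def Dm_def axis_def vec_eq_iff)
  have "rows (Dm f) = (\<lambda>i. axis (f i) (1::real)) ` UNIV" by (auto simp: rows_def r)
  hence rows: "rows (Dm f) = (\<lambda>y. axis y (1::real)) ` range f" by (simp add: image_image)
  have ind: "independent ((\<lambda>y. axis y (1::real)) ` range f)"
    by (rule independent_mono[OF independent_Basis]) (auto simp: Basis_vec_def)
  have "rank (Dm f) = card ((\<lambda>y. axis y (1::real)) ` range f)"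
    unfolding row_rank_def rows using ind by (rule dim_eq_card_independent)
  also have "\<dots> = card (range f)"
    by (rule card_image) (auto simp: inj_on_def axis_eq_axis)
  finally show ?thesis .
qed


definition valid :: "('m::finite \<Rightarrow> 'n::finite \<Rightarrow> real) \<Rightarrow> (('m \<Rightarrow> 'n) \<Rightarrow> real) \<Rightarrow> bool" where
  "valid w lam \<longleftrightarrow> (\<forall>f. lam f \<ge> 0) \<and> (\<Sum>f\<in>UNIV. lam f) = 1
     \<and> (\<forall>x y. w x y = (\<Sum>f\<in>UNIV. lam f * (if f x = y then 1 else 0)))"

lemma sum_det:
  fixes lam :: "real^'n::finite^'m::finite \<Rightarrow> real"
  shows "(\<Sum>D\<in>det_channels. lam D * h D) = (\<Sum>f\<in>UNIV. lam (Dm f) * h (Dm f))"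
  unfolding det_channels_eq by (subst sum.reindex[OF inj_Dm]) simp

lemma sum_det1:
  fixes lam :: "real^'n::finite^'m::finite \<Rightarrow> real"
  shows "(\<Sum>D\<in>det_channels. lam D) = (\<Sum>f\<in>UNIV. lam (Dm f))"
  unfolding det_channels_eq by (subst sum.reindex[OF inj_Dm]) simp

lemma Lambda_valid:
  fixes W :: "real^'n::finite^'m::finite"
  assumes "lam \<in> Lambda W"
  shows "valid (\<lambda>x y. W $ x $ y) (\<lambda>f. lam (Dm f))"
proof -
  have W: "W = (\<Sum>D\<in>det_channels. lam D *\<^sub>R D)" using assms by (simp add: Lambda_def)
  have "W $ x $ y = (\<Sum>D\<in>det_channels. lam D * D $ x $ y)" for x y
    by (subst W) simp
  also have "\<dots> x y = (\<Sum>f\<in>UNIV. lam (Dm f) * (if f x = y then 1 else 0))" for x y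
    by (simp add: sum_det Dm_nth)
  finally show ?thesis using assms by (auto simp: valid_def Lambda_def sum_det1)
qed

definition lift :: "(('m::finite \<Rightarrow> 'n::finite) \<Rightarrow> real) \<Rightarrow> real^'n^'m \<Rightarrow> real" where
  "lift lam D = (if D \<in> range Dm then lam (inv Dm D) else 0)"

lemma lift_Dm: "lift lam (Dm f) = lam f"
  by (simp add: lift_def inv_f_f[OF inj_Dm])

lemma lift_Lambda:
  fixes W :: "real^'n::finite^'m::finite"
  assumes "valid (\<lambda>x y. W $ x $ y) lam"
  shows "lift lam \<in> Lambda W"
proof -
  have "(\<Sum>D\<in>det_channels. lift lam D *\<^sub>R D) $ x $ y = W $ x $ y" for x y
  proof -
    have "(\<Sum>D\<in>det_channels. lift lam D *\<^sub>R D) $ x $ y = (\<Sum>D\<in>det_channels. lift lam D * D $ x $ y)"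
      by simp
    also have "\<dots> = (\<Sum>f\<in>UNIV. lam f * (if f x = y then 1 else 0))"
      by (simp add: sum_det lift_Dm Dm_nth)
    also have "\<dots> = W $ x $ y" using assms by (simp add: valid_def)
    finally show ?thesis .
  qed
  hence "W = (\<Sum>D\<in>det_channels. lift lam D *\<^sub>R D)" by (simp add: vec_eq_iff)
  moreover have "(\<Sum>D\<in>det_channels. lift lam D) = 1"
    using assms by (simp add: sum_det1 lift_Dm valid_def)
  moreover have "lift lam D \<ge> 0" for D using assms by (simp add: lift_def valid_def)
  moreover have "D \<notin> det_channels \<Longrightarrow> lift lam D = 0" for D by (simp add: lift_def det_channels_eq)
  ultimately show ?thesis by (simp add: Lambda_def)
qed

lemma C11_maps: "C11 lam = (\<Sum>f\<in>UNIV. lam (Dm f) * log 2 (real (card (range f))))"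
  unfolding C11_def by (simp add: sum_det rank_Dm)

lemma P_lam_maps: "P_lam lam r = (\<Sum>f\<in>UNIV. lam (Dm f) * (if card (range f) = r then 1 else 0))"
proof -
  have "P_lam lam r = (\<Sum>D\<in>det_channels. if rank D = r then lam D else 0)"
    unfolding P_lam_def by (rule sum.inter_filter) (simp add: det_channels_eq)
  also have "\<dots> = (\<Sum>D\<in>det_channels. lam D * (if rank D = r then 1 else 0))"
    by (rule sum.cong) auto
  also have "\<dots> = (\<Sum>f\<in>UNIV. lam (Dm f) * (if card (range f) = r then 1 else 0))"
    by (simp add: sum_det rank_Dm)
  finally show ?thesis .
qed




lemma exp_le:
  fixes lam :: "'a::finite \<Rightarrow> real"
  assumes "\<forall>f. lam f \<ge> 0" "(\<Sum>f\<in>UNIV. lam f) = 1" "\<And>f. lam f > 0 \<Longrightarrow> h f \<le> c"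
  shows "(\<Sum>f\<in>UNIV. lam f * h f) \<le> c"
proof -
  have "(\<Sum>f\<in>UNIV. lam f * h f) \<le> (\<Sum>f\<in>UNIV. lam f * c)"
  proof (rule sum_mono)
    fix f show "lam f * h f \<le> lam f * c"
    proof (cases "lam f > 0")
      case True thus ?thesis using assms(3)[OF True] by simp
    next
      case False hence "lam f = 0" using assms(1) by (meson not_less order_antisym)
      thus ?thesis by simp
    qed
  qed
  also have "\<dots> = c" using assms(2) by (simp add: sum_distrib_right[symmetric])
  finally show ?thesis .
qed

lemma exp_ge:
  fixes lam :: "'a::finite \<Rightarrow> real"
  assumes "\<forall>f. lam f \<ge> 0" "(\<Sum>f\<in>UNIV. lam f) = 1" "\<And>f. lam f > 0 \<Longrightarrow> h f \<ge> c"
  shows "(\<Sum>f\<in>UNIV. lam f * h f) \<ge> c"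
proof -
  have "(\<Sum>f\<in>UNIV. lam f * c) \<le> (\<Sum>f\<in>UNIV. lam f * h f)"
  proof (rule sum_mono)
    fix f show "lam f * c \<le> lam f * h f"
    proof (cases "lam f > 0")
      case True thus ?thesis using assms(3)[OF True] by simp
    next
      case False hence "lam f = 0" using assms(1) by (meson not_less order_antisym)
      thus ?thesis by simp
    qed
  qed
  moreover have "(\<Sum>f\<in>UNIV. lam f * c) = c" using assms(2) by (simp add: sum_distrib_right[symmetric])
  ultimately show ?thesis by simp
qed

lemma exp_eq:
  fixes lam :: "'a::finite \<Rightarrow> real"
  assumes "\<forall>f. lam f \<ge> 0" "(\<Sum>f\<in>UNIV. lam f) = 1" "\<And>f. lam f > 0 \<Longrightarrow> h f = c"
  shows "(\<Sum>f\<in>UNIV. lam f * h f) = c"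
proof -
  have "(\<Sum>f\<in>UNIV. lam f * h f) \<le> c" by (rule exp_le[OF assms(1,2)]) (simp add: assms(3))
  moreover have "(\<Sum>f\<in>UNIV. lam f * h f) \<ge> c" by (rule exp_ge[OF assms(1,2)]) (simp add: assms(3))
  ultimately show ?thesis by simp
qed

lemma exp_mono:
  fixes lam :: "'a::finite \<Rightarrow> real"
  assumes "\<forall>f. lam f \<ge> 0" "\<And>f. lam f > 0 \<Longrightarrow> h1 f \<le> h2 f"
  shows "(\<Sum>f\<in>UNIV. lam f * h1 f) \<le> (\<Sum>f\<in>UNIV. lam f * h2 f)"
proof (rule sum_mono)
  fix f show "lam f * h1 f \<le> lam f * h2 f"
  proof (cases "lam f > 0")
    case True thus ?thesis using assms(2)[OF True] by simp
  next
    case False hence "lam f = 0" using assms(1) by (meson not_less order_antisym)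
    thus ?thesis by simp
  qed
qed

lemma exp_cong:
  fixes lam :: "'a::finite \<Rightarrow> real"
  assumes "\<forall>f. lam f \<ge> 0" "\<And>f. lam f > 0 \<Longrightarrow> h1 f = h2 f"
  shows "(\<Sum>f\<in>UNIV. lam f * h1 f) = (\<Sum>f\<in>UNIV. lam f * h2 f)"
proof -
  have "(\<Sum>f\<in>UNIV. lam f * h1 f) \<le> (\<Sum>f\<in>UNIV. lam f * h2 f)"
    by (rule exp_mono[OF assms(1)]) (simp add: assms(2))
  moreover have "(\<Sum>f\<in>UNIV. lam f * h2 f) \<le> (\<Sum>f\<in>UNIV. lam f * h1 f)"
    by (rule exp_mono[OF assms(1)]) (simp add: assms(2))
  ultimately show ?thesis by simp
qed

lemma cs_valid:
  assumes "valid w lam"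
  shows "cs w j = (\<Sum>f\<in>UNIV. lam f * real (card {x. f x = j}))"
proof -
  have "cs w j = (\<Sum>x\<in>UNIV. \<Sum>f\<in>UNIV. lam f * (if f x = j then 1 else 0))"
    using assms by (simp add: cs_def valid_def)
  also have "\<dots> = (\<Sum>f\<in>UNIV. \<Sum>x\<in>UNIV. lam f * (if f x = j then 1 else 0))" by (rule sum.swap)
  also have "\<dots> = (\<Sum>f\<in>UNIV. lam f * real (card {x. f x = j}))"
    by (simp add: sum_distrib_left[symmetric] sum.If_cases)
  finally show ?thesis .
qed

lemma decomp_valid: "decomp w lam \<Longrightarrow> valid w lam"
  by (simp add: decomp_def valid_def)

lemma range_ge1: "card (range (f :: 'm::finite \<Rightarrow> 'n::finite)) \<ge> 1"
  by (simp add: Suc_le_eq card_gt_0_iff)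

lemma range_le_m: "card (range (f :: 'm::finite \<Rightarrow> 'n::finite)) \<le> CARD('m)"
  by (rule card_image_le) simp

lemma range_le_n: "card (range (f :: 'm::finite \<Rightarrow> 'n::finite)) \<le> CARD('n)"
  by (rule card_mono) auto

lemma cnt_range:
  fixes f :: "'m::finite \<Rightarrow> 'n::finite"
  shows "card {x. f x = j} + card (range f) \<le> CARD('m) + 1"
proof -
  have "range f - {j} \<subseteq> f ` (UNIV - {x. f x = j})" by auto
  hence "card (range f - {j}) \<le> card (f ` (UNIV - {x. f x = j}))" by (rule card_mono[rotated]) simp
  also have "\<dots> \<le> card (UNIV - {x. f x = j})" by (rule card_image_le) simp
  finally have "card (range f - {j}) \<le> card (UNIV - {x. f x = j})" .
  moreover have "card (UNIV - {x. f x = j}) = CARD('m) - card {x. f x = j}"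
    by (simp add: card_Diff_subset)
  moreover have "card (range f - {j}) \<ge> card (range f) - 1"
    by (simp add: card_Diff_singleton_if)
  moreover have "card {x. f x = j} \<le> CARD('m)" by (rule card_mono) auto
  ultimately show ?thesis by linarith
qed

lemma range1_iff:
  fixes f :: "'m::finite \<Rightarrow> 'n::finite"
  shows "card (range f) = 1 \<longleftrightarrow> (\<exists>c. \<forall>x. f x = c)"
proof
  assume "card (range f) = 1"
  then obtain c where "range f = {c}" by (metis card_1_singletonE)
  thus "\<exists>c. \<forall>x. f x = c" by auto
next
  assume "\<exists>c. \<forall>x. f x = c"
  then obtain c where "\<forall>x. f x = c" by auto
  hence "range f = {c}" by auto
  thus "card (range f) = 1" by simp
qed

lemma log2_le_nat:
  fixes r :: nat
  assumes "r \<ge> 1"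
  shows "log 2 (real r) \<le> real r - 1"
  using assms
proof (induction r rule: nat_induct_at_least)
  case base thus ?case by simp
next
  case (Suc r)
  have "log 2 (real (Suc r)) \<le> log 2 (2 * real r)"
    using Suc.hyps by (simp add: log_le_cancel_iff)
  also have "\<dots> = 1 + log 2 (real r)" using Suc.hyps by (simp add: log_mult)
  finally show ?case using Suc.IH by simp
qed

lemma sum_cnt:
  fixes f :: "'m::finite \<Rightarrow> 'n::finite"
  shows "(\<Sum>j\<in>UNIV. real (card {x. f x = j})) = real CARD('m)"
proof -
  have "(\<Sum>j\<in>UNIV. real (card {x. f x = j})) = (\<Sum>j\<in>UNIV. \<Sum>x\<in>UNIV. if f x = j then 1 else (0::real))"
    by (simp add: sum.If_cases)
  also have "\<dots> = (\<Sum>x\<in>UNIV. \<Sum>j\<in>UNIV. if f x = j then 1 else (0::real))" by (rule sum.swap)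
  also have "\<dots> = real CARD('m)" by simp
  finally show ?thesis .
qed




lemma gamma_bound:
  fixes f :: "'m::finite \<Rightarrow> 'n::finite" and c :: "'n \<Rightarrow> real"
  assumes cnn: "\<And>j. c j \<ge> 0"
    and lo: "\<And>j. \<lfloor>c j\<rfloor> \<le> int (card {x. f x = j})"
    and hi: "\<And>j. int (card {x. f x = j}) \<le> \<lceil>c j\<rceil>"
  shows "real (card {j. \<lfloor>c j\<rfloor> \<noteq> 0}) + max 0 (real CARD('m) - real_of_int (\<Sum>j\<in>{j. \<lfloor>c j\<rfloor> \<noteq> 0}. \<lceil>c j\<rceil>))
         \<le> real (card (range f))"
proof -
  define S where "S = {j. \<lfloor>c j\<rfloor> \<noteq> 0}"
  define cn where "cn j = card {x. f x = j}" for j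
  have SR: "S \<subseteq> range f"
  proof
    fix j assume "j \<in> S"
    hence "\<lfloor>c j\<rfloor> \<noteq> 0" by (simp add: S_def)
    moreover have "0 \<le> \<lfloor>c j\<rfloor>" using cnn[of j] by simp
    ultimately have "\<lfloor>c j\<rfloor> \<ge> 1" by linarith
    hence "int (cn j) \<ge> 1" using lo[of j] unfolding cn_def by linarith
    hence "cn j \<ge> 1" by simp
    hence "{x. f x = j} \<noteq> {}" unfolding cn_def by (metis card.empty not_one_le_zero)
    thus "j \<in> range f" by auto
  qed
  have out1: "cn j \<le> 1" if "j \<notin> S" for j
  proof -
    have "\<lfloor>c j\<rfloor> = 0" using that by (simp add: S_def)
    hence "c j < 1" by (simp add: floor_eq_iff)
    hence c1: "\<lceil>c j\<rceil> \<le> 1" by (simp add: ceiling_le_iff)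
    have "int (cn j) \<le> 1" using hi[of j] c1 unfolding cn_def by linarith
    thus ?thesis by simp
  qed
  have out_eq: "real (cn j) = (if j \<in> range f then 1 else 0)" if "j \<notin> S" for j
  proof (cases "j \<in> range f")
    case True
    hence "{x. f x = j} \<noteq> {}" by auto
    hence "cn j \<noteq> 0" by (simp add: cn_def)
    thus ?thesis using out1[OF that] True by simp
  next
    case False
    hence "{x. f x = j} = {}" by auto
    thus ?thesis using False by (simp add: cn_def)
  qed
  have tot: "real CARD('m) = (\<Sum>j\<in>S. real (cn j)) + (\<Sum>j\<in>UNIV - S. real (cn j))"
    using sum_cnt[of f] by (simp add: cn_def sum.subset_diff[of S UNIV])
  have "(\<Sum>j\<in>UNIV - S. real (cn j)) = (\<Sum>j\<in>UNIV - S. if j \<in> range f then 1 else 0)"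
    by (rule sum.cong) (auto simp: out_eq)
  also have "\<dots> = real (card ((UNIV - S) \<inter> range f))"
    by (simp add: sum.If_cases)
  also have "(UNIV - S) \<inter> range f = range f - S" by auto
  finally have out_sum: "(\<Sum>j\<in>UNIV - S. real (cn j)) = real (card (range f - S))" .
  have in_sum: "(\<Sum>j\<in>S. real (cn j)) \<le> real_of_int (\<Sum>j\<in>S. \<lceil>c j\<rceil>)"
  proof -
    have "(\<Sum>j\<in>S. real (cn j)) \<le> (\<Sum>j\<in>S. real_of_int \<lceil>c j\<rceil>)"
    proof (rule sum_mono)
      fix j
      have "real_of_int (int (cn j)) \<le> real_of_int \<lceil>c j\<rceil>" using hi[of j] unfolding cn_def of_int_le_iff .
      thus "real (cn j) \<le> real_of_int \<lceil>c j\<rceil>" by simp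
    qed
    thus ?thesis by simp
  qed
  have rk: "card (range f) = card S + card (range f - S)"
    using SR by (simp add: card_Diff_subset card_mono)
  show ?thesis
    unfolding S_def[symmetric] using tot out_sum in_sum rk by simp
qed

theorem theorem2:
  fixes W :: "real^'n^'m" and m n k :: nat and g :: real
  assumes "m = CARD('m)" and "n = CARD('n)"
    and "m \<ge> 2" and "n \<ge> 2"
    and "is_channel W"
    and "g = Max (range (colsum W))"
    and "k = min m n"
  shows
     "P_lower W 1 = max 0 (g - real m + 1)
     \<and> ((P_lower W 1 > 0 \<or> m = 2 \<or> n = 2) \<longrightarrow> C11_bar W = 1 - P_lower W 1)
     \<and> (\<not> (P_lower W 1 > 0 \<or> m = 2 \<or> n = 2) \<longrightarrow>
          log 2 (gamma W) \<le> C11_bar W \<and>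
          C11_bar W \<le> log 2 (real k - 1) + P_upper W k * log 2 (real k / (real k - 1)))
     \<and> ((m \<le> n \<and> (\<forall>j. colsum W j \<le> 1)) \<longrightarrow> C11_bar W = log 2 (real m))
     \<and> ((m \<ge> n \<and> (\<forall>j. colsum W j \<ge> 1)) \<longrightarrow> C11_bar W = log 2 (real n))"
proof -
  note mdef = assms(1) and ndef = assms(2)
  define w where "w = (\<lambda>x y. W $ x $ y)"
  define rk where "rk f = card (range f)" for f :: "'m \<Rightarrow> 'n"
  define cnt where "cnt f j = card {x. f x = j}" for f :: "'m \<Rightarrow> 'n" and j
  have st: "stoch w" using assms(5) by (simp add: stoch_def is_channel_def w_def)
  have colsum_eq: "colsum W = cs w" by (simp add: fun_eq_iff colsum_def cs_def w_def)
  have csnn: "cs w j \<ge> 0" for j using st unfolding cs_def stoch_def by (simp add: sum_nonneg)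
  obtain lam0 where d0: "decomp w lam0" using decomp_exists[OF st] by blast
  have v0: "valid w lam0" by (rule decomp_valid[OF d0])
  have nn0: "\<forall>f. lam0 f \<ge> 0" and s0: "(\<Sum>f\<in>UNIV. lam0 f) = 1" using v0 by (auto simp: valid_def)
  have good0: "good w f" if "lam0 f > 0" for f using d0 that by (simp add: decomp_def)
  define L0 where "L0 = lift lam0"
  have L0in: "L0 \<in> Lambda W" unfolding L0_def using v0 by (intro lift_Lambda) (simp add: w_def)
  have C11_L0: "C11 L0 = (\<Sum>f\<in>UNIV. lam0 f * log 2 (real (rk f)))"
    by (simp add: C11_maps L0_def lift_Dm rk_def)
  have P_L0: "P_lam L0 i = (\<Sum>f\<in>UNIV. lam0 f * (if rk f = i then 1 else 0))" for i
    by (simp add: P_lam_maps L0_def lift_Dm rk_def)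
  have LamW_ne: "Lambda W \<noteq> {}" using L0in by blast
  have gen: "valid w (\<lambda>f. lam (Dm f))
      \<and> C11 lam = (\<Sum>f\<in>UNIV. lam (Dm f) * log 2 (real (rk f)))
      \<and> (\<forall>i. P_lam lam i = (\<Sum>f\<in>UNIV. lam (Dm f) * (if rk f = i then 1 else 0)))"
    if "lam \<in> Lambda W" for lam
    using Lambda_valid[OF that] by (simp add: C11_maps P_lam_maps rk_def w_def)
  have fin_rng: "finite (range (colsum W))" by simp
  have "g \<in> range (colsum W)" using Max_in[OF fin_rng] assms(6) by auto
  then obtain j0 where j0: "g = cs w j0" using colsum_eq by auto
  have csle: "cs w j \<le> g" for j
    using assms(6) colsum_eq Max_ge[OF fin_rng, of "colsum W j"] by auto
  have rk1: "rk f \<ge> 1" for f unfolding rk_def by (rule range_ge1)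
  have rkm: "rk f \<le> m" for f unfolding rk_def mdef by (rule range_le_m)
  have rkn: "rk f \<le> n" for f unfolding rk_def ndef by (rule range_le_n)
  have cntrk: "cnt f j + rk f \<le> m + 1" for f j unfolding rk_def cnt_def mdef by (rule cnt_range)
  have cntm: "cnt f j \<le> m" for f j unfolding cnt_def mdef by (rule card_mono) auto
  have cs_exp: "cs w j = (\<Sum>f\<in>UNIV. l f * real (cnt f j))" if "valid w l" for l j
    using cs_valid[OF that] by (simp add: cnt_def)
  have exp_ind: "(\<Sum>f\<in>UNIV. l f * (a + b * (if P f then 1 else 0))) = a + b * (\<Sum>f\<in>UNIV. l f * (if P f then 1 else 0))"
    if "(\<Sum>f\<in>UNIV. l f) = 1" for l :: "('m \<Rightarrow> 'n) \<Rightarrow> real" and a b P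
    using that by (simp add: algebra_simps sum.distrib sum_distrib_left[symmetric] sum_distrib_right[symmetric])
  have P01: "0 \<le> P_lam lam i \<and> P_lam lam i \<le> 1" if "lam \<in> Lambda W" for lam i
  proof -
    have v: "valid w (\<lambda>f. lam (Dm f))" and P: "P_lam lam i = (\<Sum>f\<in>UNIV. lam (Dm f) * (if rk f = i then 1 else 0))"
      using gen[OF that] by auto
    have nn: "\<forall>f. lam (Dm f) \<ge> 0" and s: "(\<Sum>f\<in>UNIV. lam (Dm f)) = 1" using v by (auto simp: valid_def)
    show ?thesis unfolding P
      by (intro conjI exp_ge[OF nn s] exp_le[OF nn s]) auto
  qed
  have P1ge: "P_lam lam 1 \<ge> g - real m + 1" if "lam \<in> Lambda W" for lam
  proof -
    have v: "valid w (\<lambda>f. lam (Dm f))" and P: "P_lam lam 1 = (\<Sum>f\<in>UNIV. lam (Dm f) * (if rk f = 1 then 1 else 0))"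
      using gen[OF that] by auto
    have nn: "\<forall>f. lam (Dm f) \<ge> 0" and s: "(\<Sum>f\<in>UNIV. lam (Dm f)) = 1" using v by (auto simp: valid_def)
    have "g = (\<Sum>f\<in>UNIV. lam (Dm f) * real (cnt f j0))" using j0 cs_exp[OF v] by simp
    also have "\<dots> \<le> (\<Sum>f\<in>UNIV. lam (Dm f) * ((real m - 1) + 1 * (if rk f = 1 then 1 else 0)))"
    proof (rule exp_mono[OF nn])
      fix f
      show "real (cnt f j0) \<le> (real m - 1) + 1 * (if rk f = 1 then 1 else 0)"
      proof (cases "rk f = 1")
        case True thus ?thesis using cntm[of f j0] by simp
      next
        case False
        hence "rk f \<ge> 2" using rk1[of f] by linarith
        thus ?thesis using cntrk[of f j0] False by simp
      qed
    qed
    also have "\<dots> = real m - 1 + P_lam lam 1" using exp_ind[OF s, of "real m - 1" 1 "\<lambda>f. rk f = 1"] P by simp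
    finally show ?thesis by simp
  qed
  have glo: "\<lfloor>cs w j\<rfloor> \<le> int (cnt f j)" if "lam0 f > 0" for f j
    using good0[OF that] by (simp add: good_def cnt_def)
  have ghi: "int (cnt f j) \<le> \<lceil>cs w j\<rceil>" if "lam0 f > 0" for f j
    using good0[OF that] by (simp add: good_def cnt_def)
  have const_cnt: "cnt f c = m" if "\<forall>x. f x = c" for f c
    using that by (simp add: cnt_def mdef)
  have const_cnt0: "cnt f j = 0" if "\<forall>x. f x = c" "j \<noteq> c" for f c j
    using that by (simp add: cnt_def)
  have rk1_iff: "rk f = 1 \<longleftrightarrow> (\<exists>c. \<forall>x. f x = c)" for f unfolding rk_def by (rule range1_iff)
  have case_hi: "real (cnt f j0) = real m - 1 + (if rk f = 1 then 1 else 0) \<and> rk f \<le> 2"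
    if "g > real m - 1" "lam0 f > 0" for f
  proof -
    have "\<lfloor>g\<rfloor> \<ge> int m - 1" using that(1) by (simp add: le_floor_iff)
    hence c1: "int (cnt f j0) \<ge> int m - 1" using glo[OF that(2), of j0] j0 by simp
    show ?thesis
    proof (cases "rk f = 1")
      case True
      then obtain c where c: "\<forall>x. f x = c" using rk1_iff by blast
      have "c = j0"
      proof (rule ccontr)
        assume "c \<noteq> j0"
        hence "cnt f j0 = 0" using const_cnt0[OF c] by simp
        thus False using c1 assms(3) by simp
      qed
      thus ?thesis using True const_cnt[OF c] by simp
    next
      case False
      hence "rk f \<ge> 2" using rk1[of f] by linarith
      hence "cnt f j0 \<le> m - 1" using cntrk[of f j0] by linarith
      hence "cnt f j0 = m - 1" using c1 by linarith
      thus ?thesis using False cntrk[of f j0] assms(3) by auto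
    qed
  qed
  have case_lo: "rk f \<noteq> 1" if "g \<le> real m - 1" "lam0 f > 0" for f
  proof
    assume "rk f = 1"
    then obtain c where c: "\<forall>x. f x = c" using rk1_iff by blast
    have "cs w c \<le> of_int (int m - 1)" using csle[of c] that(1) by simp
    hence "\<lceil>cs w c\<rceil> \<le> int m - 1" using ceiling_le_iff[of "cs w c" "int m - 1"] by blast
    hence "int (cnt f c) \<le> int m - 1" using ghi[OF that(2), of c] by linarith
    thus False using const_cnt[OF c] by simp
  qed
  have P1_L0: "P_lam L0 1 = max 0 (g - real m + 1)"
  proof (cases "g > real m - 1")
    case True
    have "g = (\<Sum>f\<in>UNIV. lam0 f * real (cnt f j0))" using j0 cs_exp[OF v0] by simp
    also have "\<dots> = (\<Sum>f\<in>UNIV. lam0 f * ((real m - 1) + 1 * (if rk f = 1 then 1 else 0)))"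
      by (rule exp_cong[OF nn0]) (use case_hi[OF True] in simp)
    also have "\<dots> = real m - 1 + P_lam L0 1" using exp_ind[OF s0, of "real m - 1" 1 "\<lambda>f. rk f = 1"] P_L0 by simp
    finally show ?thesis using True by simp
  next
    case False
    have "P_lam L0 1 = 0" unfolding P_L0
      by (rule exp_eq[OF nn0 s0]) (use case_lo False in auto)
    thus ?thesis using False by simp
  qed
  have Plow: "P_lower W 1 = max 0 (g - real m + 1)"
  proof -
    have "Inf ((\<lambda>lam. P_lam lam 1) ` Lambda W) = P_lam L0 1"
    proof (rule cInf_eq_minimum)
      show "P_lam L0 1 \<in> (\<lambda>lam. P_lam lam 1) ` Lambda W" using L0in by blast
    next
      fix x assume "x \<in> (\<lambda>lam. P_lam lam 1) ` Lambda W"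
      then obtain lam where "lam \<in> Lambda W" "x = P_lam lam 1" by blast
      thus "P_lam L0 1 \<le> x" using P1ge P01 P1_L0 by fastforce
    qed
    thus ?thesis unfolding P_lower_def using P1_L0 by simp
  qed
  have genC: "valid w (\<lambda>f. lam (Dm f)) \<and> (\<forall>f. lam (Dm f) \<ge> 0) \<and> (\<Sum>f\<in>UNIV. lam (Dm f)) = 1
      \<and> C11 lam = (\<Sum>f\<in>UNIV. lam (Dm f) * log 2 (real (rk f)))" if "lam \<in> Lambda W" for lam
    using gen[OF that] by (auto simp: valid_def)
  have logrk_m: "log 2 (real (rk f)) \<le> log 2 (real m)" for f
    using rk1[of f] rkm[of f] by (simp add: log_le_cancel_iff)
  have logrk_n: "log 2 (real (rk f)) \<le> log 2 (real n)" for f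
    using rk1[of f] rkn[of f] by (simp add: log_le_cancel_iff)
  have C11_le_m: "C11 lam \<le> log 2 (real m)" if "lam \<in> Lambda W" for lam
    using genC[OF that] logrk_m by (auto intro!: exp_le)
  have C11_le_n: "C11 lam \<le> log 2 (real n)" if "lam \<in> Lambda W" for lam
    using genC[OF that] logrk_n by (auto intro!: exp_le)
  have bddC: "bdd_above (C11 ` Lambda W)"
    using C11_le_m by (auto intro!: bdd_aboveI[of _ "log 2 (real m)"])
  have C11_le_Sup: "C11 lam \<le> C11_bar W" if "lam \<in> Lambda W" for lam
    unfolding C11_bar_def using bddC that by (auto intro!: cSup_upper)
  have C11_bar_eq: "C11_bar W = C11 L0" if "\<And>lam. lam \<in> Lambda W \<Longrightarrow> C11 lam \<le> C11 L0"
    unfolding C11_bar_def using that L0in by (intro cSup_eq_maximum) auto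
  have C11_mg: "C11 lam \<le> real m - g" if "lam \<in> Lambda W" for lam
  proof -
    have v: "valid w (\<lambda>f. lam (Dm f))" and nn: "\<forall>f. lam (Dm f) \<ge> 0" and s: "(\<Sum>f\<in>UNIV. lam (Dm f)) = 1"
      and C: "C11 lam = (\<Sum>f\<in>UNIV. lam (Dm f) * log 2 (real (rk f)))" using genC[OF that] by auto
    have "C11 lam \<le> (\<Sum>f\<in>UNIV. lam (Dm f) * (real m - real (cnt f j0)))"
      unfolding C
    proof (rule exp_mono[OF nn])
      fix f
      have "log 2 (real (rk f)) \<le> real (rk f) - 1" using log2_le_nat rk1 by blast
      also have "\<dots> \<le> real m - real (cnt f j0)" using cntrk[of f j0] by linarith
      finally show "log 2 (real (rk f)) \<le> real m - real (cnt f j0)" .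
    qed
    also have "\<dots> = real m - (\<Sum>f\<in>UNIV. lam (Dm f) * real (cnt f j0))"
      using s by (simp add: right_diff_distrib sum_subtractf sum_distrib_right[symmetric])
    also have "\<dots> = real m - g" using j0 cs_exp[OF v] by simp
    finally show ?thesis .
  qed
  have C11_two: "C11 lam = 1 - P_lam lam 1" if "lam \<in> Lambda W" "m = 2 \<or> n = 2" for lam
  proof -
    have nn: "\<forall>f. lam (Dm f) \<ge> 0" and s: "(\<Sum>f\<in>UNIV. lam (Dm f)) = 1"
      and C: "C11 lam = (\<Sum>f\<in>UNIV. lam (Dm f) * log 2 (real (rk f)))" using genC[OF that(1)] by auto
    have P: "P_lam lam 1 = (\<Sum>f\<in>UNIV. lam (Dm f) * (if rk f = 1 then 1 else 0))" using gen[OF that(1)] by auto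
    have "C11 lam = (\<Sum>f\<in>UNIV. lam (Dm f) * (1 + (-1) * (if rk f = 1 then 1 else 0)))"
      unfolding C
    proof (rule exp_cong[OF nn])
      fix f
      have "rk f \<le> 2" using rkm[of f] rkn[of f] that(2) by auto
      hence "rk f = 1 \<or> rk f = 2" using rk1[of f] by linarith
      thus "log 2 (real (rk f)) = 1 + (-1) * (if rk f = 1 then 1 else 0)" by auto
    qed
    also have "\<dots> = 1 - P_lam lam 1" using exp_ind[OF s, of 1 "-1" "\<lambda>f. rk f = 1"] P by simp
    finally show ?thesis .
  qed
  have part2: "C11_bar W = 1 - P_lower W 1" if cond: "P_lower W 1 > 0 \<or> m = 2 \<or> n = 2"
  proof -
    have rk2: "rk f \<le> 2" if "lam0 f > 0" for f
    proof (cases "g > real m - 1")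
      case True thus ?thesis using case_hi[OF True that] by simp
    next
      case False
      hence "m = 2 \<or> n = 2" using cond Plow by auto
      thus ?thesis using rkm[of f] rkn[of f] by auto
    qed
    have CL0: "C11 L0 = 1 - P_lam L0 1"
    proof -
      have "C11 L0 = (\<Sum>f\<in>UNIV. lam0 f * (1 + (-1) * (if rk f = 1 then 1 else 0)))"
        unfolding C11_L0
      proof (rule exp_cong[OF nn0])
        fix f assume "lam0 f > 0"
        hence "rk f = 1 \<or> rk f = 2" using rk2 rk1[of f] by force
        thus "log 2 (real (rk f)) = 1 + (-1) * (if rk f = 1 then 1 else 0)" by auto
      qed
      also have "\<dots> = 1 - P_lam L0 1" using exp_ind[OF s0, of 1 "-1" "\<lambda>f. rk f = 1"] P_L0 by simp
      finally show ?thesis .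
    qed
    have "C11_bar W = C11 L0"
    proof (rule C11_bar_eq)
      fix lam assume lam: "lam \<in> Lambda W"
      show "C11 lam \<le> C11 L0"
      proof (cases "m = 2 \<or> n = 2")
        case True
        have "P_lam L0 1 \<le> P_lam lam 1" using P1_L0 P1ge[OF lam] P01[OF lam] by simp
        thus ?thesis using C11_two[OF lam True] CL0 by simp
      next
        case False
        hence "g > real m - 1" using cond Plow by auto
        thus ?thesis using C11_mg[OF lam] CL0 P1_L0 by simp
      qed
    qed
    thus ?thesis using CL0 P1_L0 Plow by simp
  qed
  have part3: "log 2 (gamma W) \<le> C11_bar W \<and>
          C11_bar W \<le> log 2 (real k - 1) + P_upper W k * log 2 (real k / (real k - 1))"
    if cond: "\<not> (P_lower W 1 > 0 \<or> m = 2 \<or> n = 2)"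
  proof
    have k3: "k \<ge> 3" using cond assms(3,4,7) by auto
    define S where "S = {j. \<lfloor>cs w j\<rfloor> \<noteq> 0}"
    have gam: "gamma W = real (card S) + max 0 (real m - real_of_int (\<Sum>j\<in>S. \<lceil>cs w j\<rceil>))"
      unfolding gamma_def Let_def S_def colsum_eq mdef by simp
    have gpos: "gamma W > 0"
    proof (cases "S = {}")
      case True thus ?thesis using gam assms(3) by simp
    next
      case False
      hence "card S > 0" by (simp add: card_gt_0_iff)
      thus ?thesis using gam by simp
    qed
    have "log 2 (gamma W) \<le> C11 L0"
      unfolding C11_L0
    proof (rule exp_ge[OF nn0 s0])
      fix f assume pos: "lam0 f > 0"
      have "gamma W \<le> real (rk f)"
        unfolding gam S_def rk_def mdef
        by (rule gamma_bound) (use csnn glo[OF pos] ghi[OF pos] in \<open>auto simp: cnt_def\<close>)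
      thus "log 2 (gamma W) \<le> log 2 (real (rk f))" using gpos by (simp add: log_le_cancel_iff)
    qed
    thus "log 2 (gamma W) \<le> C11_bar W" using C11_le_Sup[OF L0in] by linarith
  next
    have k3: "k \<ge> 3" using cond assms(3,4,7) by auto
    define L where "L = log 2 (real k / (real k - 1))"
    have L0: "L \<ge> 0" using k3 by (simp add: L_def)
    have bddP: "bdd_above ((\<lambda>lam. P_lam lam k) ` Lambda W)"
      using P01 by (auto intro!: bdd_aboveI[of _ 1])
    have Pup: "P_lam lam k \<le> P_upper W k" if "lam \<in> Lambda W" for lam
      unfolding P_upper_def using bddP that by (auto intro!: cSup_upper)
    have bound: "C11 lam \<le> log 2 (real k - 1) + P_upper W k * L" if lam: "lam \<in> Lambda W" for lam
    proof -
      have nn: "\<forall>f. lam (Dm f) \<ge> 0" and s: "(\<Sum>f\<in>UNIV. lam (Dm f)) = 1"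
        and C: "C11 lam = (\<Sum>f\<in>UNIV. lam (Dm f) * log 2 (real (rk f)))" using genC[OF lam] by auto
      have P: "P_lam lam k = (\<Sum>f\<in>UNIV. lam (Dm f) * (if rk f = k then 1 else 0))" using gen[OF lam] by auto
      have "C11 lam \<le> (\<Sum>f\<in>UNIV. lam (Dm f) * (log 2 (real k - 1) + L * (if rk f = k then 1 else 0)))"
        unfolding C
      proof (rule exp_mono[OF nn])
        fix f
        have rkk: "rk f \<le> k" using rkm[of f] rkn[of f] assms(7) by simp
        show "log 2 (real (rk f)) \<le> log 2 (real k - 1) + L * (if rk f = k then 1 else 0)"
        proof (cases "rk f = k")
          case True
          have "log 2 (real k) = log 2 (real k - 1) + L"
            unfolding L_def using k3 by (simp add: log_divide)
          thus ?thesis using True by simp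
        next
          case False
          hence "real (rk f) \<le> real k - 1" using rkk by linarith
          hence "log 2 (real (rk f)) \<le> log 2 (real k - 1)"
            using rk1[of f] by (simp add: log_le_cancel_iff)
          thus ?thesis using False by simp
        qed
      qed
      also have "\<dots> = log 2 (real k - 1) + L * P_lam lam k"
        using exp_ind[OF s, of "log 2 (real k - 1)" L "\<lambda>f. rk f = k"] P by simp
      also have "\<dots> \<le> log 2 (real k - 1) + P_upper W k * L"
        using Pup[OF lam] L0 by (simp add: mult.commute mult_left_mono)
      finally show ?thesis .
    qed
    show "C11_bar W \<le> log 2 (real k - 1) + P_upper W k * log 2 (real k / (real k - 1))"
      unfolding C11_bar_def L_def[symmetric] using LamW_ne bound by (auto intro!: cSup_least)
  qed
  have part4: "C11_bar W = log 2 (real m)" if cond: "m \<le> n \<and> (\<forall>j. colsum W j \<le> 1)"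
  proof -
    have "C11 L0 = log 2 (real m)"
      unfolding C11_L0
    proof (rule exp_eq[OF nn0 s0])
      fix f assume pos: "lam0 f > 0"
      have "cnt f j \<le> 1" for j
      proof -
        have "cs w j \<le> of_int 1" using cond colsum_eq by simp
        hence "\<lceil>cs w j\<rceil> \<le> 1" using ceiling_le_iff[of "cs w j" 1] by blast
        hence "int (cnt f j) \<le> 1" using ghi[OF pos, of j] by linarith
        thus ?thesis by simp
      qed
      hence "inj f"
      proof (intro injI)
        fix x y assume "f x = f y"
        hence "{x, y} \<subseteq> {z. f z = f x}" by auto
        hence "card {x, y} \<le> cnt f (f x)" unfolding cnt_def by (rule card_mono[rotated]) simp
        thus "x = y" using \<open>\<And>j. cnt f j \<le> 1\<close>[of "f x"] by (cases "x = y") auto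
      qed
      hence "rk f = m" unfolding rk_def mdef by (simp add: card_image)
      thus "log 2 (real (rk f)) = log 2 (real m)" by simp
    qed
    thus ?thesis using C11_bar_eq C11_le_m by simp
  qed
  have part5: "C11_bar W = log 2 (real n)" if cond: "m \<ge> n \<and> (\<forall>j. colsum W j \<ge> 1)"
  proof -
    have "C11 L0 = log 2 (real n)"
      unfolding C11_L0
    proof (rule exp_eq[OF nn0 s0])
      fix f assume pos: "lam0 f > 0"
      have "cnt f j \<ge> 1" for j
      proof -
        have "of_int 1 \<le> cs w j" using cond colsum_eq by simp
        hence "1 \<le> \<lfloor>cs w j\<rfloor>" using le_floor_iff[of 1 "cs w j"] by blast
        hence "int (cnt f j) \<ge> 1" using glo[OF pos, of j] by linarith
        thus ?thesis by simp
      qed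
      hence "surj f"
      proof -
        have "j \<in> range f" for j
        proof -
          have "{x. f x = j} \<noteq> {}" using \<open>\<And>j. cnt f j \<ge> 1\<close>[of j] unfolding cnt_def
            by (metis card.empty not_one_le_zero)
          thus ?thesis by auto
        qed
        thus ?thesis by auto
      qed
      hence "rk f = n" unfolding rk_def ndef by simp
      thus "log 2 (real (rk f)) = log 2 (real n)" by simp
    qed
    thus ?thesis using C11_bar_eq C11_le_n by simp
  qed
  show ?thesis using Plow part2 part3 part4 part5 by blast
qed


end
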